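(* Let $m\ge 3$ and $n\ge 5$ be integers, let $\Gamma=C_m\Box C_n$ with vertex set $\{0,\dots,m-1\}\times\{0,\dots,n-1\}$, and let $S$ be a disjunctive dominating set of $\Gamma$ whose column sequence $x_0,\dots,x_{n-1}$ (where $x_j=|S\cap\{(i,j):0\le i\le m-1\}|$) is proper, i.e. $x_0>0$ and $x_{n-1}=0$. Decompose $x_0,\dots,x_{n-1}$ into its blocks $X_0,\dots,X_{e-1}$, where each block is a maximal run of consecutive terms consisting of $p_i\ge1$ positive terms followed by $q_i\ge 1$ zero terms. Then $q_i\le 3$ for every $i=0,\dots,e-1$.
   Context: $C_k$ denotes the cycle with vertex set $\{0,\dots,k-1\}$, where $i,j$ are adjacent iff $i-j\equiv\pm1\pmod k$. $G\Box H$ is the Cartesian product: vertex set $V(G)\times V(H)$, with $(g,h)\sim(g',h')$ iff either $g=g'$ and $hh'\in E(H)$, or $h=h'$ and $gg'\in E(G)$. For a graph $\Gamma$ and vertex $v$, $\Gamma(v)$ is the set of vertices at distance $1$ from $v$ and $\Gamma_2(v)$ the set at distance exactly $2$. A set $S\subseteq V(\Gamma)$ is a disjunctive dominating set if every vertex $v\notin S$ satisfies $|\Gamma(v)\cap S|\ge 1$ or $|\Gamma_2(v)\cap S|\ge 2$. Blocks: for a sequence with $x_0>0$ and $x_{n-1}=0$, write it uniquely as a concatenation $X_0X_1\cdots X_{e-1}$ where $X_i=(x_{k_i+1},\dots,x_{k_i+p_i},x_{k_i+p_i+1},\dots,x_{k_i+p_i+q_i})$ with $x_{k_i+1},\dots,x_{k_i+p_i}>0$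 and $x_{k_i+p_i+1}=\dots=x_{k_i+p_i+q_i}=0$, $p_i,q_i\ge1$. *)

theory Defs
  imports Main
begin

definition cyc_adj :: "nat \<Rightarrow> nat \<Rightarrow> nat \<Rightarrow> bool" where
  "cyc_adj k i j \<longleftrightarrow> i < k \<and> j < k \<and> ((i + 1) mod k = j \<or> (j + 1) mod k = i)"

definition torus_V :: "nat \<Rightarrow> nat \<Rightarrow> (nat \<times> nat) set" where
  "torus_V m n = {0..<m} \<times> {0..<n}"

definition torus_adj :: "nat \<Rightarrow> nat \<Rightarrow> nat \<times> nat \<Rightarrow> nat \<times> nat \<Rightarrow> bool" where
  "torus_adj m n u v \<longleftrightarrow> u \<in> torus_V m n \<and> v \<in> torus_V m n \<and>
     ((fst u = fst v \<and> cyc_adj n (snd u) (snd v)) \<or> (snd u = snd v \<and> cyc_adj m (fst u) (fst v)))"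

definition torus_N1 :: "nat \<Rightarrow> nat \<Rightarrow> nat \<times> nat \<Rightarrow> (nat \<times> nat) set" where
  "torus_N1 m n v = {u \<in> torus_V m n. torus_adj m n v u}"

definition torus_N2 :: "nat \<Rightarrow> nat \<Rightarrow> nat \<times> nat \<Rightarrow> (nat \<times> nat) set" where
  "torus_N2 m n v = {u \<in> torus_V m n. u \<noteq> v \<and> \<not> torus_adj m n v u \<and>
      (\<exists>w. torus_adj m n v w \<and> torus_adj m n w u)}"

definition disj_dom :: "nat \<Rightarrow> nat \<Rightarrow> (nat \<times> nat) set \<Rightarrow> bool" where
  "disj_dom m n S \<longleftrightarrow> S \<subseteq> torus_V m n \<and>
     (\<forall>v \<in> torus_V m n - S. card (torus_N1 m n v \<inter> S) \<ge> 1 \<or> card (torus_N2 m n v \<inter> S) \<ge> 2)"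

definition col_seq :: "nat \<Rightarrow> (nat \<times> nat) set \<Rightarrow> nat \<Rightarrow> nat" where
  "col_seq m S j = card (S \<inter> ({0..<m} \<times> {j}))"

text \<open>A block decomposition of x_0..x_{n-1}: list of pairs (p_i, q_i), block i starts at
  k_i = sum of (p_l + q_l) for l < i, has p_i positive terms then q_i zero terms,
  p_i, q_i \<ge> 1, and the blocks exactly cover positions 0..n-1.\<close>
definition block_start :: "(nat \<times> nat) list \<Rightarrow> nat \<Rightarrow> nat" where
  "block_start B i = (\<Sum>l<i. fst (B ! l) + snd (B ! l))"

definition is_block_decomp :: "(nat \<Rightarrow> nat) \<Rightarrow> nat \<Rightarrow> (nat \<times> nat) list \<Rightarrow> bool" where
  "is_block_decomp x n B \<longleftrightarrow>
     block_start B (length B) = n \<and>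
     (\<forall>i < length B. fst (B ! i) \<ge> 1 \<and> snd (B ! i) \<ge> 1 \<and>
        (\<forall>t. 1 \<le> t \<and> t \<le> fst (B ! i) \<longrightarrow> x (block_start B i + t - 1) > 0) \<and>
        (\<forall>t. fst (B ! i) < t \<and> t \<le> fst (B ! i) + snd (B ! i) \<longrightarrow> x (block_start B i + t - 1) = 0))"

end

theory Submission
  imports Defs
begin

lemma cyc_adj_mid:
  assumes "cyc_adj n a b" "1 \<le> a" "a + 1 < n"
  shows "b = a - 1 \<or> b = a + 1"
proof -
  have "b < n" using assms(1) unfolding cyc_adj_def by auto
  moreover have "(a + 1) mod n = b \<or> (b + 1) mod n = a" using assms(1) unfolding cyc_adj_def by auto
  ultimately show ?thesis using assms(2,3)
    by (metis Suc_eq_plus1 Suc_lessI add_diff_cancel_right' less_not_refl mod_less mod_self not_one_le_zero)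
qed

lemma torus_adj_mid:
  assumes "torus_adj m n v w" "1 \<le> snd v" "snd v + 1 < n"
  shows "(snd w = snd v - 1 \<or> snd w = snd v \<or> snd w = snd v + 1) \<and> (snd w \<noteq> snd v \<longrightarrow> fst w = fst v)"
  using assms cyc_adj_mid[of n "snd v" "snd w"] unfolding torus_adj_def by auto

lemma block_end:
  assumes "i < length B"
  shows "block_start B i + fst (B ! i) + snd (B ! i) \<le> block_start B (length B)"
proof -
  have "block_start B i + fst (B ! i) + snd (B ! i) = block_start B (Suc i)"
    unfolding block_start_def by simp
  also have "\<dots> \<le> block_start B (length B)"
    unfolding block_start_def using assms by (intro sum_mono2) auto
  finally show ?thesis .
qed

theorem lemma2:
  fixes m n :: nat and S :: "(nat \<times> nat) set" and B :: "(nat \<times> nat) list"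
  assumes "m \<ge> 3" and "n \<ge> 5"
    and "disj_dom m n S"
    and "col_seq m S 0 > 0" and "col_seq m S (n - 1) = 0"
    and "is_block_decomp (col_seq m S) n B"
  shows "\<forall>i < length B. snd (B ! i) \<le> 3"
proof (rule ccontr)
  assume "\<not> ?thesis"
  then obtain i where i: "i < length B" "snd (B ! i) \<ge> 4" by auto
  define c where "c = block_start B i + fst (B ! i)"
  have SV: "S \<subseteq> torus_V m n" using assms(3) unfolding disj_dom_def by auto
  have finS: "finite S" using SV unfolding torus_V_def by (rule finite_subset) auto
  have p1: "fst (B ! i) \<ge> 1" using assms(6) i unfolding is_block_decomp_def by auto
  have c1: "c \<ge> 1" using p1 c_def by auto
  have cn: "c + 3 < n" using block_end[OF i(1)] assms(6) i(2) c_def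
    unfolding is_block_decomp_def by auto
  have zero: "col_seq m S (c + k) = 0" if "k < 4" for k
  proof -
    have "col_seq m S (block_start B i + (fst (B ! i) + k + 1) - 1) = 0"
    proof -
      have "\<forall>t. fst (B ! i) < t \<and> t \<le> fst (B ! i) + snd (B ! i) \<longrightarrow> col_seq m S (block_start B i + t - 1) = 0"
        using assms(6) i(1) unfolding is_block_decomp_def by blast
      moreover have "fst (B ! i) < fst (B ! i) + k + 1 \<and> fst (B ! i) + k + 1 \<le> fst (B ! i) + snd (B ! i)"
        using that i(2) by linarith
      ultimately show ?thesis by blast
    qed
    then show ?thesis unfolding c_def by (simp add: add.assoc)
  qed
  have notin: "(a, c + k) \<notin> S" if "k < 4" for a k
  proof
    assume a: "(a, c + k) \<in> S"
    then have "a < m" using SV unfolding torus_V_def by auto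
    then have "(a, c + k) \<in> S \<inter> ({0..<m} \<times> {c + k})" using a by auto
    moreover have "finite (S \<inter> ({0..<m} \<times> {c + k}))" using finS by auto
    ultimately have "col_seq m S (c + k) > 0" unfolding col_seq_def
      by (metis card_gt_0_iff empty_iff)
    with zero[OF that] show False by simp
  qed
  have notin': "u \<notin> S" if "c \<le> snd u" "snd u \<le> c + 3" for u
    using notin[of "snd u - c" "fst u"] that by (cases u) auto
  define v where "v = (0::nat, c + 1)"
  have vV: "v \<in> torus_V m n" using assms(1) cn unfolding v_def torus_V_def by auto
  have vS: "v \<notin> S" using notin'[of v] unfolding v_def by auto
  have N1: "torus_N1 m n v \<inter> S = {}"
  proof -
    have "u \<notin> S" if "torus_adj m n v u" for u
    proof -
      have "snd u = c \<or> snd u = c + 1 \<or> snd u = c + 2"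
        using torus_adj_mid[OF that] cn unfolding v_def by auto
      then show ?thesis using notin'[of u] by auto
    qed
    then show ?thesis unfolding torus_N1_def by auto
  qed
  have N2: "torus_N2 m n v \<inter> S \<subseteq> {(0, c - 1)}"
  proof
    fix u assume u: "u \<in> torus_N2 m n v \<inter> S"
    then obtain w where w: "torus_adj m n v w" "torus_adj m n w u" unfolding torus_N2_def by auto
    have hw: "(snd w = c \<or> snd w = c + 1 \<or> snd w = c + 2) \<and> (snd w \<noteq> c + 1 \<longrightarrow> fst w = 0)"
      using torus_adj_mid[OF w(1)] cn unfolding v_def by auto
    have hu: "(snd u = snd w - 1 \<or> snd u = snd w \<or> snd u = snd w + 1) \<and> (snd u \<noteq> snd w \<longrightarrow> fst u = fst w)"
      using torus_adj_mid[OF w(2)] hw cn c1 by auto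
    have "u \<in> S" using u by auto
    then have "\<not> (c \<le> snd u \<and> snd u \<le> c + 3)" using notin' by blast
    then have "snd u = c - 1 \<and> snd w = c" using hw hu c1 by auto
    then have "snd u = c - 1 \<and> fst u = 0" using hw hu c1 by auto
    then show "u \<in> {(0, c - 1)}" by (cases u) auto
  qed
  have "card (torus_N2 m n v \<inter> S) \<le> 1"
    using card_mono[OF _ N2] by simp
  moreover have "card (torus_N1 m n v \<inter> S) = 0" using N1 by simp
  moreover have "card (torus_N1 m n v \<inter> S) \<ge> 1 \<or> card (torus_N2 m n v \<inter> S) \<ge> 2"
    using assms(3) vV vS unfolding disj_dom_def by blast
  ultimately show False by linarith
qed

end
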